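(* Let $F$, $H$, $X$, $\Omega$, $Q$ and the sequences generated by the IneIREG method be as described in the context, and suppose $H$ is $\mu$-strongly monotone for some $\mu>0$. Suppose $0<\lambda_k<1/L_k$ for all $k\ge0$, where $L_k:=L_F+\eta_kL_H$; and $\alpha_0\in[0,1]$ and $\alpha_{k+1}\le(1-\beta_k)\alpha_k$ for all $k\ge0$, where $\beta_k:=\big(\frac{1}{1-\lambda_k^2L_k^2}+\frac{1}{2\lambda_k\eta_k\mu}\big)^{-1}$. Define $p_{-1}:=1$ and $p_k:=\big(\prod_{i=0}^k(1-\beta_i)\big)^{-1}$ for $k\ge0$. Then for all $k\ge1$, $$\sum_{j=0}^{k-1}p_{j-1}\delta_j\le2kD_X^2.$$
   Context: Work in $\mathbb{R}^n$ with Euclidean inner product $\langle\cdot,\cdot\rangle$ and norm $\|\cdot\|$. The maps $F\colon \mathrm{Dom}\,F\to\mathbb{R}^n$ and $H\colon\mathrm{Dom}\,H\to\mathbb{R}^n$ are monotone and Lipschitz continuous with constants $L_F>0$ and $L_H>0$; $H$ is $\mu$-strongly monotone means $\langle H(x)-H(y),x-y\rangle\ge\mu\|x-y\|^2$ for all $x,y\in\mathrm{Dom}\,H$. $X$ is a nonempty compact convex set and $\Omega$ a nonempty closed convex set with $X\subset\Omega\subset\mathrm{Dom}\,F\cap\mathrm{Dom}\,H$; $P_X,P_\Omega$ denote orthogonal projections. $Q:=\{x\in X:\langle F(x),y-x\rangle\ge0\ \forall y\in X\}$ is assumed nonempty. $D_X:=\sup_{x,y\in X}\|x-y\|$. IneIREG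 method: start with $x_0=x_{-1}\in X$; for $k=0,1,\dots$, with parameters $\alpha_k\ge0$, $\lambda_k>0$, $\eta_k>0$, set $w_k=x_k+\alpha_k(x_k-x_{k-1})$, $w'_k=P_\Omega(w_k)$, $y_k=P_X\big(w_k-\lambda_k(F(w'_k)+\eta_kH(w'_k))\big)$, $x_{k+1}=P_X\big(w_k-\lambda_k(F(y_k)+\eta_kH(y_k))\big)$. Also $\delta_k:=\alpha_k(1+\alpha_k)\|x_k-x_{k-1}\|^2$ for $k\ge0$. *)

theory Defs
  imports "HOL-Analysis.Analysis"
begin

definition monotone_op :: "'a::real_inner set \<Rightarrow> ('a \<Rightarrow> 'a) \<Rightarrow> bool" where
  "monotone_op D F \<longleftrightarrow> (\<forall>x\<in>D. \<forall>y\<in>D. inner (F x - F y) (x - y) \<ge> 0)"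

definition strongly_monotone_op :: "real \<Rightarrow> 'a::real_inner set \<Rightarrow> ('a \<Rightarrow> 'a) \<Rightarrow> bool" where
  "strongly_monotone_op mu D H \<longleftrightarrow>
     (\<forall>x\<in>D. \<forall>y\<in>D. inner (H x - H y) (x - y) \<ge> mu * (norm (x - y))\<^sup>2)"

definition prev_iter :: "(nat \<Rightarrow> 'a) \<Rightarrow> nat \<Rightarrow> 'a" where
  "prev_iter x k = (if k = 0 then x 0 else x (k - 1))"

end

theory Submission
  imports Defs
begin

theorem lemma4p13:
  fixes F H :: "'a::euclidean_space \<Rightarrow> 'a"
    and DF DH X \<Omega> :: "'a set"
    and LF LH mu :: real
    and x y :: "nat \<Rightarrow> 'a"
    and alpha lambda eta :: "nat \<Rightarrow> real"
  assumes F_mono: "monotone_op DF F" and F_lip: "LF > 0" "LF-lipschitz_on DF F"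
    and H_mono: "monotone_op DH H" and H_lip: "LH > 0" "LH-lipschitz_on DH H"
    and mu_pos: "mu > 0" and H_strong: "strongly_monotone_op mu DH H"
    and X: "X \<noteq> {}" "compact X" "convex X"
    and Om: "\<Omega> \<noteq> {}" "closed \<Omega>" "convex \<Omega>"
    and subs: "X \<subseteq> \<Omega>" "\<Omega> \<subseteq> DF \<inter> DH"
    and Q_ne: "{z \<in> X. \<forall>v\<in>X. inner (F z) (v - z) \<ge> 0} \<noteq> {}"
    and x0: "x 0 \<in> X"
    and params: "\<And>k. alpha k \<ge> 0" "\<And>k. lambda k > 0" "\<And>k. eta k > 0"
    and step_y: "\<And>k. y k = closest_point X
        (x k + alpha k *\<^sub>R (x k - prev_iter x k)
          - lambda k *\<^sub>R (F (closest_point \<Omega> (x k + alpha k *\<^sub>R (x k - prev_iter x k)))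
              + eta k *\<^sub>R H (closest_point \<Omega> (x k + alpha k *\<^sub>R (x k - prev_iter x k)))))"
    and step_x: "\<And>k. x (Suc k) = closest_point X
        (x k + alpha k *\<^sub>R (x k - prev_iter x k)
          - lambda k *\<^sub>R (F (y k) + eta k *\<^sub>R H (y k)))"
    and lam_bound: "\<And>k. lambda k < 1 / (LF + eta k * LH)"
    and alpha0: "alpha 0 \<le> 1"
    and alpha_dec: "\<And>k. alpha (Suc k) \<le>
        (1 - inverse (1 / (1 - (lambda k)\<^sup>2 * (LF + eta k * LH)\<^sup>2)
                      + 1 / (2 * lambda k * eta k * mu))) * alpha k"
    and k1: "k \<ge> 1"
  shows "(\<Sum>j<k. inverse (\<Prod>i<j. 1 - inverse (1 / (1 - (lambda i)\<^sup>2 * (LF + eta i * LH)\<^sup>2)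
                                              + 1 / (2 * lambda i * eta i * mu)))
              * (alpha j * (1 + alpha j) * (norm (x j - prev_iter x j))\<^sup>2))
         \<le> 2 * real k * (diameter X)\<^sup>2"
proof -
  define b where "b i = inverse (1 / (1 - (lambda i)\<^sup>2 * (LF + eta i * LH)\<^sup>2)
                                              + 1 / (2 * lambda i * eta i * mu))" for i
  define P where "P j = (\<Prod>i<j. 1 - b i)" for j
  have bb: "0 < b i \<and> b i < 1" for i
  proof -
    define L where "L = LF + eta i * LH"
    have Lp: "L > 0" using F_lip H_lip params(3)[of i] unfolding L_def
      by (simp add: add_pos_pos)
    have "lambda i * L < 1" using lam_bound[of i] Lp unfolding L_def[symmetric]
      by (simp add: field_simps)
    moreover have "0 < lambda i * L" using Lp params(2)[of i] by simp
    moreover have sq: "0 < t\<^sup>2 \<and> t\<^sup>2 < 1" if t: "t < 1" "0 < t" for t :: real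
    proof -
      have "t * t < t * 1" using mult_strict_left_mono[OF t(1) t(2)] .
      then have "t * t < 1" using t by linarith
      then show ?thesis using t by (simp add: power2_eq_square)
    qed
    ultimately have c: "0 < (lambda i * L)\<^sup>2" "(lambda i * L)\<^sup>2 < 1" by auto
    have d: "(lambda i)\<^sup>2 * L\<^sup>2 = (lambda i * L)\<^sup>2" by (simp add: power_mult_distrib)
    have e1: "1 / (1 - (lambda i)\<^sup>2 * L\<^sup>2) \<ge> 1" using c d by (simp add: field_simps)
    have e2: "1 / (2 * lambda i * eta i * mu) > 0" using params(2,3)[of i] mu_pos by simp
    have "b i = inverse (1 / (1 - (lambda i)\<^sup>2 * L\<^sup>2) + 1 / (2 * lambda i * eta i * mu))"
      unfolding b_def L_def ..
    moreover have "1 < 1 / (1 - (lambda i)\<^sup>2 * L\<^sup>2) + 1 / (2 * lambda i * eta i * mu)"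
      using e1 e2 by linarith
    ultimately show ?thesis by (metis inverse_less_1_iff inverse_positive_iff_positive less_trans zero_less_one)
  qed
  have Pp: "0 < P j \<and> P j \<le> 1" for j
    unfolding P_def using bb
    by (auto intro!: prod_pos prod_le_1 simp: less_imp_le)
  have aP: "alpha j \<le> P j * alpha 0" for j
  proof (induction j)
    case 0 then show ?case by (simp add: P_def)
  next
    case (Suc j)
    have "alpha (Suc j) \<le> (1 - b j) * alpha j" using alpha_dec[of j] unfolding b_def .
    also have "\<dots> \<le> (1 - b j) * (P j * alpha 0)"
      using Suc bb[of j] by (intro mult_left_mono) auto
    also have "\<dots> = P (Suc j) * alpha 0" by (simp add: P_def)
    finally show ?case .
  qed
  have xX: "x j \<in> X" for j
  proof (cases j)
    case 0 then show ?thesis using x0 by simp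
  next
    case (Suc m) then show ?thesis
      using step_x[of m] closest_point_in_set[OF compact_imp_closed[OF X(2)] X(1)] by simp
  qed
  have pX: "prev_iter x j \<in> X" for j unfolding prev_iter_def using xX by simp
  have trm: "inverse (P j) * (alpha j * (1 + alpha j) * (norm (x j - prev_iter x j))\<^sup>2)
      \<le> 2 * (diameter X)\<^sup>2" for j
  proof -
    have n: "norm (x j - prev_iter x j) \<le> diameter X"
      using diameter_bounded_bound[OF compact_imp_bounded[OF X(2)] xX pX] by (simp add: dist_norm)
    have n2: "(norm (x j - prev_iter x j))\<^sup>2 \<le> (diameter X)\<^sup>2"
      using n by (intro power_mono) auto
    have a1: "inverse (P j) * alpha j \<le> 1"
    proof -
      have "alpha j / P j \<le> alpha 0" using aP[of j] Pp[of j]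
        by (simp add: pos_divide_le_eq mult.commute)
      then show ?thesis using alpha0 by (simp add: divide_inverse mult.commute)
    qed
    have a2: "1 + alpha j \<le> 2"
      using aP[of j] mult_le_one[of "P j" "alpha 0"] Pp[of j] alpha0 params(1)[of 0]
      by linarith
    have "inverse (P j) * (alpha j * (1 + alpha j) * (norm (x j - prev_iter x j))\<^sup>2)
       = (inverse (P j) * alpha j) * ((1 + alpha j) * (norm (x j - prev_iter x j))\<^sup>2)"
      by (simp add: algebra_simps)
    also have "\<dots> \<le> 1 * (2 * (diameter X)\<^sup>2)"
      using a1 a2 n2 Pp[of j] params(1)[of j]
      by (intro mult_mono) (auto intro: mult_mono)
    finally show ?thesis by simp
  qed
  have "(\<Sum>j<k. inverse (P j) * (alpha j * (1 + alpha j) * (norm (x j - prev_iter x j))\<^sup>2))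
      \<le> (\<Sum>j<k. 2 * (diameter X)\<^sup>2)"
    by (intro sum_mono trm)
  then show ?thesis unfolding P_def b_def by simp
qed

end
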